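(* For every integer $b\ge0$, the number $jp_b(1)$ of multiplex juggling patterns with exactly $b$ balls and minimal period $1$ equals $p(b)$, the number of (unordered) partitions of $b$.
   Context: A multiplex siteswap of length $n$ is a sequence $(M_0,\ldots,M_{n-1})$, indexed by $t\in\mathbb{Z}/n\mathbb{Z}$, of finite multisets of positive integers (empty means no throw) such that for every $t$, $|M_t|$ equals the number of pairs $(s,h)$ with $h$ an element of $M_s$ (with multiplicity) and $s+h\equiv t\pmod n$; its number of balls is $\frac1n\sum_t\sum_{h\in M_t}h$. Its minimal period is the least $d\ge1$ with $M_{t+d}=M_t$ for all $t$. A multiplex juggling pattern with $b$ balls and minimal period $n$ is an orbit, under cyclic rotation, of multiplex siteswaps of length $n$ with $b$ balls and minimal period $n$. $p(0)=1$. *)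

theory Defs
  imports Main "HOL-Library.Multiset"
begin

text \<open>A multiplex siteswap of length n: a list of n multisets of positive integers
  (index t stands for t in Z/nZ), with the landing condition.\<close>
definition is_mss :: "nat \<Rightarrow> nat multiset list \<Rightarrow> bool" where
  "is_mss n L \<longleftrightarrow> length L = n \<and>
     (\<forall>t<n. \<forall>h\<in>#L!t. h > 0) \<and>
     (\<forall>t<n. size (L!t) = (\<Sum>s<n. size (filter_mset (\<lambda>h. (s + h) mod n = t) (L!s))))"

text \<open>Number of balls is b, i.e. (1/n) * total sum of throws = b.\<close>
definition has_balls :: "nat \<Rightarrow> nat \<Rightarrow> nat multiset list \<Rightarrow> bool" where
  "has_balls n b L \<longleftrightarrow> (\<Sum>t<n. sum_mset (L!t)) = b * n"

definition min_period :: "nat multiset list \<Rightarrow> nat" where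
  "min_period L = (LEAST d. d \<ge> 1 \<and> (\<forall>t<length L. L!((t + d) mod length L) = L!t))"

definition jp :: "nat \<Rightarrow> nat \<Rightarrow> nat" where
  "jp b n = card {{rotate k L | k. True} | L. is_mss n L \<and> has_balls n b L \<and> min_period L = n}"

definition npart :: "nat \<Rightarrow> nat" where
  "npart b = card {M :: nat multiset. (\<forall>x\<in>#M. x > 0) \<and> sum_mset M = b}"

end

theory Submission
  imports Defs
begin

lemma rot1: "length L = 1 \<Longrightarrow> {rotate k L | k. True} = {L}"
  by (cases L) auto

lemma mp1: "length L = 1 \<Longrightarrow> min_period L = 1"
  unfolding min_period_def
  by (rule Least_equality) auto

lemma mss1: "is_mss 1 [M] \<longleftrightarrow> (\<forall>h\<in>#M. h > 0)"
  unfolding is_mss_def by auto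

theorem theorem9:
  fixes b :: nat
  shows "jp b 1 = npart b"
proof -
  let ?S = "{M :: nat multiset. (\<forall>x\<in>#M. x > 0) \<and> sum_mset M = b}"
  have eq: "{{rotate k L | k. True} | L. is_mss 1 L \<and> has_balls 1 b L \<and> min_period L = 1}
        = (\<lambda>M. {[M]}) ` ?S"
  proof (intro set_eqI iffI)
    fix X assume "X \<in> {{rotate k L | k. True} | L. is_mss 1 L \<and> has_balls 1 b L \<and> min_period L = 1}"
    then obtain L where X: "X = {rotate k L | k. True}" and m: "is_mss 1 L" and hb: "has_balls 1 b L"
      by blast
    from m have l: "length L = 1" by (simp add: is_mss_def)
    then obtain M where L: "L = [M]" by (cases L) auto
    have "M \<in> ?S" using m hb L unfolding mss1 has_balls_def by (simp add: mss1[unfolded One_nat_def])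
    moreover have "X = {[M]}" using X L rot1[OF l] by simp
    ultimately show "X \<in> (\<lambda>M. {[M]}) ` ?S" by blast
  next
    fix X assume "X \<in> (\<lambda>M. {[M]}) ` ?S"
    then obtain M where X: "X = {[M]}" and M: "M \<in> ?S" by blast
    have "is_mss 1 [M] \<and> has_balls 1 b [M] \<and> min_period [M] = 1"
      using M mss1[of M] mp1[of "[M]"] by (simp add: has_balls_def)
    moreover have "X = {rotate k [M] | k. True}" using X rot1[of "[M]"] by simp
    ultimately show "X \<in> {{rotate k L | k. True} | L. is_mss 1 L \<and> has_balls 1 b L \<and> min_period L = 1}"
      by blast
  qed
  have "inj_on (\<lambda>M. {[M]}) ?S" by (auto simp: inj_on_def)
  then show ?thesis unfolding jp_def npart_def eq by (rule card_image)
qed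

end
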